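(* Let $q\ge 2$, $n\ge 1$, $h\in F(n,q)$ and $k=\kappa^{\min}(h)$. Then $$\mathcal{L}^*(h)=\mathcal{L}(h\,|\,n+k)=\Omega(h)+k .$$
   Context: Let $q\ge 2$, $A=\{0,1,\dots,q-1\}$, $[n]=\{1,\dots,n\}$, and let $F(n,q)$ be the set of all maps $A^n\to A^n$. For $f\in F(m,q)$ and $i\in[m]$, $f_i$ is the $i$-th coordinate function and $f^i(x)=(x_1,\dots,x_{i-1},f_i(x),x_{i+1},\dots,x_m)$; for a word $w=(w_1,\dots,w_t)$ over $[m]$, $f^w=f^{w_t}\circ\cdots\circ f^{w_1}$. $\Pi([m])$ is the set of permutations of $[m]$ written as words $(w_1,\dots,w_m)$. $\mathrm{pr}_{[n]}:A^m\to A^n$ is the projection onto the first $n$ coordinates. For $m\ge n$, $(f,w)$ with $f\in F(m,q)$, $w\in\Pi([m])$ sequentializes $h\in F(n,q)$ if $\mathrm{pr}_{[n]}\circ f^w=h\circ\mathrm{pr}_{[n]}$. $\kappa^{\min}(h)$ is the smallest $k\ge 0$ such that there exist $f\in F(n+k,q)$ and $w\in\Pi([n+k])$ with $(f,w)$ sequentializing $h$. A coordinate function $h_i$ is trivial if $h_i(x)=x_i$ for all $x$; $\Omega(h)$ is the number of $i\in[n]$ such that $h_i$ is not trivial. $F^*(m,q)$ is the set of $g\in F(m,q)$ that update at most one coordinate, i.e. there is $i\in[m]$ with $g_j(x)=x_j$ for all $j\ne i$ and all $x\in A^m$. For $m\ge n$, $\mathcal{L}(h\,|\,m)$ is the smallest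 $t\ge 0$ such that there exist $g^{(1)},\dots,g^{(t)}\in F^*(m,q)$ with $\mathrm{pr}_{[n]}\circ g^{(t)}\circ\cdots\circ g^{(1)}=h\circ\mathrm{pr}_{[n]}$, and $\mathcal{L}^*(h)=\min\{\mathcal{L}(h\,|\,m): m\ge n\}$. *)

theory Defs
  imports Main
begin

text \<open>Elements of A^m (A = {0..q-1}) are represented as lists of length m with
  entries < q. Coordinates are 0-based: paper coordinate i corresponds to list index i-1.\<close>

definition states :: "nat \<Rightarrow> nat \<Rightarrow> nat list set" where
  "states q m = {x. length x = m \<and> (\<forall>i<m. x ! i < q)}"

text \<open>f is (a representative of) an element of F(m,q): it maps A^m into A^m.
  Only its values on A^m matter.\<close>
definition is_map :: "nat \<Rightarrow> nat \<Rightarrow> (nat list \<Rightarrow> nat list) \<Rightarrow> bool" where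
  "is_map q m f = (\<forall>x\<in>states q m. f x \<in> states q m)"

definition upd :: "(nat list \<Rightarrow> nat list) \<Rightarrow> nat \<Rightarrow> nat list \<Rightarrow> nat list" where
  "upd f i x = x[i := f x ! i]"

definition seq_apply :: "(nat list \<Rightarrow> nat list) \<Rightarrow> nat list \<Rightarrow> nat list \<Rightarrow> nat list" where
  "seq_apply f w x = fold (\<lambda>i y. upd f i y) w x"

definition is_perm_word :: "nat \<Rightarrow> nat list \<Rightarrow> bool" where
  "is_perm_word m w = (distinct w \<and> set w = {..<m})"

definition sequentializes ::
  "nat \<Rightarrow> nat \<Rightarrow> nat \<Rightarrow> (nat list \<Rightarrow> nat list) \<Rightarrow> (nat list \<Rightarrow> nat list) \<Rightarrow> nat list \<Rightarrow> bool" where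
  "sequentializes q n m h f w =
     (n \<le> m \<and> is_map q m f \<and> is_perm_word m w \<and>
      (\<forall>x\<in>states q m. take n (seq_apply f w x) = h (take n x)))"

definition kappa_min :: "nat \<Rightarrow> nat \<Rightarrow> (nat list \<Rightarrow> nat list) \<Rightarrow> nat" where
  "kappa_min q n h = (LEAST k. \<exists>f w. sequentializes q n (n + k) h f w)"

definition Omega :: "nat \<Rightarrow> nat \<Rightarrow> (nat list \<Rightarrow> nat list) \<Rightarrow> nat" where
  "Omega q n h = card {i. i < n \<and> \<not> (\<forall>x\<in>states q n. h x ! i = x ! i)}"

definition single_update :: "nat \<Rightarrow> nat \<Rightarrow> (nat list \<Rightarrow> nat list) \<Rightarrow> bool" where
  "single_update q m g = (is_map q m g \<and>
     (\<exists>i<m. \<forall>x\<in>states q m. \<forall>j<m. j \<noteq> i \<longrightarrow> g x ! j = x ! j))"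

definition computes_with ::
  "nat \<Rightarrow> nat \<Rightarrow> (nat list \<Rightarrow> nat list) \<Rightarrow> nat \<Rightarrow> nat \<Rightarrow> bool" where
  "computes_with q n h m t =
     (\<exists>gs. length gs = t \<and> (\<forall>g\<in>set gs. single_update q m g) \<and>
        (\<forall>x\<in>states q m. take n (fold (\<lambda>g y. g y) gs x) = h (take n x)))"

definition L :: "nat \<Rightarrow> nat \<Rightarrow> (nat list \<Rightarrow> nat list) \<Rightarrow> nat \<Rightarrow> nat" where
  "L q n h m = (LEAST t. computes_with q n h m t)"

definition Lstar :: "nat \<Rightarrow> nat \<Rightarrow> (nat list \<Rightarrow> nat list) \<Rightarrow> nat" where
  "Lstar q n h = (LEAST t. \<exists>m\<ge>n. computes_with q n h m t)"

end

theory Submission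
  imports Defs
begin

locale prog =
  fixes q n m :: nat and h :: "nat list \<Rightarrow> nat list" and gs :: "(nat list \<Rightarrow> nat list) list"
  assumes q0: "0 < q" and nm: "n \<le> m"
  and su: "\<forall>g\<in>set gs. single_update q m g"
  and cor: "\<forall>x\<in>states q m. take n (fold (\<lambda>g y. g y) gs x) = h (take n x)"
begin

definition t where "t = length gs"
definition c :: "nat \<Rightarrow> nat" where
  "c s = (SOME i. i < m \<and> (\<forall>x\<in>states q m. \<forall>j<m. j \<noteq> i \<longrightarrow> (gs!s) x ! j = x ! j))"
definition G where "G s x = (gs!s) x ! c s"
primrec S where "S 0 x = x" | "S (Suc s) x = (S s x)[c s := G s (S s x)]"
definition d where "d s \<longleftrightarrow> c s < n \<and> (\<forall>s'. s < s' \<and> s' < t \<longrightarrow> c s' \<noteq> c s)"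
definition rk where "rk s = card {s'. s' < s \<and> \<not> d s'}"
definition K where "K = rk t"
definition pos where "pos s = (if d s then c s else n + rk s)"
primrec R where "R 0 y = take n y @ replicate (m - n) 0" | "R (Suc s) y = (R s y)[c s := y ! pos s]"
definition F where "F y = map (\<lambda>p. if p \<in> pos ` {..<t} then G (the_inv_into {..<t} pos p) (R (the_inv_into {..<t} pos p) y) else y ! p) [0..<n+K]"
definition W where "W = map pos [0..<t] @ filter (\<lambda>p. p \<notin> pos ` {..<t}) [0..<n+K]"

lemma c_prop: assumes "s < t" shows "c s < m \<and> (\<forall>x\<in>states q m. \<forall>j<m. j \<noteq> c s \<longrightarrow> (gs!s) x ! j = x ! j)"
proof -
  have "gs ! s \<in> set gs" using assms by (simp add: t_def)
  then have "\<exists>i. i < m \<and> (\<forall>x\<in>states q m. \<forall>j<m. j \<noteq> i \<longrightarrow> (gs!s) x ! j = x ! j)"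
    using su unfolding single_update_def by blast
  then show ?thesis unfolding c_def by (rule someI_ex)
qed

lemma gs_states: "s < t \<Longrightarrow> x \<in> states q m \<Longrightarrow> (gs!s) x \<in> states q m"
  using su unfolding single_update_def is_map_def t_def by auto

lemma step_eq: assumes "s < t" "x \<in> states q m" shows "(gs!s) x = x[c s := G s x]"
proof (rule nth_equalityI)
  have 1: "(gs!s) x \<in> states q m" using gs_states assms by auto
  then show "length ((gs!s) x) = length (x[c s := G s x])" using assms(2) by (simp add: states_def)
  fix j assume "j < length ((gs!s) x)"
  then have "j < m" using 1 by (simp add: states_def)
  then show "(gs!s) x ! j = x[c s := G s x] ! j"
    using c_prop[OF assms(1)] assms(2) by (cases "j = c s") (auto simp: G_def states_def)
qed

lemma S_states: "j \<le> t \<Longrightarrow> x \<in> states q m \<Longrightarrow> S j x \<in> states q m"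
proof (induction j)
  case 0 then show ?case by simp
next
  case (Suc j)
  then have "S j x \<in> states q m" by simp
  then show ?case using step_eq[of j "S j x"] gs_states[of j "S j x"] Suc.prems by simp
qed

lemma fold_take: "j \<le> t \<Longrightarrow> x \<in> states q m \<Longrightarrow> fold (\<lambda>g y. g y) (take j gs) x = S j x"
proof (induction j)
  case 0 then show ?case by simp
next
  case (Suc j)
  then have "j < length gs" by (simp add: t_def)
  then have "take (Suc j) gs = take j gs @ [gs ! j]" by (simp add: take_Suc_conv_app_nth)
  then show ?case using Suc step_eq[of j "S j x"] S_states[of j x] by simp
qed

lemma fold_all: "x \<in> states q m \<Longrightarrow> fold (\<lambda>g y. g y) gs x = S t x"
  using fold_take[of t x] by (simp add: t_def)

lemma length_S[simp]: "length (S j x) = length x"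
  by (induction j) auto

lemma S_unwritten: "(\<forall>s<j. c s \<noteq> i) \<Longrightarrow> S j x ! i = x ! i"
  by (induction j) auto

end
context prog begin

lemma rk_less: assumes "s < s'" "\<not> d s" shows "rk s < rk s'"
proof -
  have "{x. x < s \<and> \<not> d x} \<subset> {x. x < s' \<and> \<not> d x}" using assms by auto
  moreover have "finite {x. x < s' \<and> \<not> d x}" by simp
  ultimately show ?thesis unfolding rk_def by (rule psubset_card_mono[rotated])
qed

lemma pos_lt: "s < t \<Longrightarrow> pos s < n + K"
  using rk_less[of s t] c_prop[of s] unfolding pos_def K_def d_def by auto

lemma pos_small: "pos s < n \<Longrightarrow> d s \<and> pos s = c s"
  unfolding pos_def by (auto split: if_splits)

lemma inj_pos: "inj_on pos {..<t}"
proof (rule inj_onI)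
  fix s s' assume a: "s \<in> {..<t}" "s' \<in> {..<t}" "pos s = pos s'"
  show "s = s'"
  proof (rule ccontr)
    assume ne: "s \<noteq> s'"
    have key: False if "x < y" "y < t" "pos x = pos y" for x y
    proof (cases "d x")
      case True
      then have "c x < n" unfolding d_def by auto
      show False
      proof (cases "d y")
        case True
        then show False using `d x` that unfolding pos_def d_def by auto
      next
        case False then show False using `d x` `c x < n` that unfolding pos_def by auto
      qed
    next
      case False
      show False
      proof (cases "d y")
        case True
        then have "c y < n" unfolding d_def by auto
        then show False using `\<not> d x` True that unfolding pos_def by auto
      next
        case False then show False using `\<not> d x` that rk_less[of x y] unfolding pos_def by auto
      qed
    qed
    show False using ne a key[of s s'] key[of s' s] by (cases "s < s'") auto
  qed
qed

lemma W_perm: "is_perm_word (n + K) W"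
proof -
  have "pos ` {..<t} \<subseteq> {..<n+K}" using pos_lt by auto
  then have "set W = {..<n+K}" unfolding W_def by force
  moreover have "distinct W" unfolding W_def using inj_pos
    by (auto simp: distinct_map lessThan_atLeast0)
  ultimately show ?thesis by (simp add: is_perm_word_def)
qed

lemma R_length: "length y = n + K \<Longrightarrow> length (R s y) = m"
  using nm by (induction s) auto

lemma R0_nth: "length y = n + K \<Longrightarrow> i < m \<Longrightarrow> R 0 y ! i = (if i < n then y ! i else 0)"
  by (auto simp: nth_append)

lemma R_states: "y \<in> states q (n + K) \<Longrightarrow> s \<le> t \<Longrightarrow> R s y \<in> states q m"
proof (induction s)
  case 0
  then show ?case using q0 R_length[of y 0] R0_nth[of y] unfolding states_def by auto
next
  case (Suc s)
  then have "R s y \<in> states q m" by simp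
  moreover have "y ! pos s < q" using Suc.prems pos_lt[of s] by (auto simp: states_def)
  moreover have "(R s y)[c s := y ! pos s] ! i < q" if "i < m" for i
    using calculation that by (cases "i = c s") (auto simp: states_def)
  ultimately show ?case by (auto simp: states_def)
qed

lemma G_lt: "s < t \<Longrightarrow> x \<in> states q m \<Longrightarrow> G s x < q"
  using gs_states c_prop unfolding G_def states_def by blast

lemma F_nth_pos: "s < t \<Longrightarrow> F y ! pos s = G s (R s y)"
  using pos_lt[of s] the_inv_into_f_f[OF inj_pos, of s] unfolding F_def by auto

lemma F_nth_other: "p < n + K \<Longrightarrow> p \<notin> pos ` {..<t} \<Longrightarrow> F y ! p = y ! p"
  unfolding F_def by auto

lemma F_map: "is_map q (n + K) F"
  unfolding is_map_def
proof
  fix y assume y: "y \<in> states q (n + K)"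
  have "F y ! p < q" if "p < n + K" for p
  proof (cases "p \<in> pos ` {..<t}")
    case True
    then obtain s where "s < t" "p = pos s" by auto
    then show ?thesis using F_nth_pos G_lt R_states[OF y] by auto
  next
    case False then show ?thesis using F_nth_other that y by (auto simp: states_def)
  qed
  then show "F y \<in> states q (n + K)" by (auto simp: states_def F_def)
qed

end
context prog begin

lemma R_agree:
  assumes "length y1 = n + K" "length y2 = n + K" "\<forall>p. p \<noteq> P \<longrightarrow> y1 ! p = y2 ! p" "\<forall>s'<s. pos s' \<noteq> P"
  shows "i < m \<Longrightarrow> (P < n \<longrightarrow> i \<noteq> P) \<Longrightarrow> R s y1 ! i = R s y2 ! i"
  using assms(4)
proof (induction s arbitrary: i)
  case 0
  then show ?case using R0_nth[OF assms(1)] R0_nth[OF assms(2)] assms(3) by auto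
next
  case (Suc s)
  show ?case
  proof (cases "i = c s")
    case True
    have "y1 ! pos s = y2 ! pos s" using Suc.prems assms(3) by auto
    then show ?thesis using True Suc.prems R_length[OF assms(1)] R_length[OF assms(2)] by simp
  next
    case False
    then show ?thesis using Suc by auto
  qed
qed

definition Y where "Y y j = fold (\<lambda>i z. upd F i z) (map pos [0..<j]) y"

lemma Y_inv: assumes "length y = n + K" shows "j \<le> t \<Longrightarrow> length (Y y j) = n + K \<and> R j (Y y j) = S j (R 0 y)"
proof (induction j)
  case 0 then show ?case using assms by (simp add: Y_def)
next
  case (Suc j)
  then have IH: "length (Y y j) = n + K" "R j (Y y j) = S j (R 0 y)" and jt: "j < t" by auto
  have YS: "Y y (Suc j) = (Y y j)[pos j := G j (S j (R 0 y))]"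
    using IH F_nth_pos[OF jt] by (simp add: Y_def upd_def)
  have l: "length (Y y (Suc j)) = n + K" using YS IH by simp
  have p: "Y y (Suc j) ! pos j = G j (S j (R 0 y))" using YS IH pos_lt[OF jt] by simp
  have agree: "R j (Y y (Suc j)) ! i = R j (Y y j) ! i" if "i < m" "pos j < n \<longrightarrow> i \<noteq> pos j" for i
  proof -
    have h3: "\<forall>p. p \<noteq> pos j \<longrightarrow> Y y (Suc j) ! p = Y y j ! p" using YS by simp
    have h4: "\<forall>s'<j. pos s' \<noteq> pos j" using inj_pos jt by (auto simp: inj_on_def)
    show ?thesis using R_agree[OF l IH(1) h3 h4 that(1) that(2)] .
  qed
  have "R (Suc j) (Y y (Suc j)) = (R j (Y y (Suc j)))[c j := G j (S j (R 0 y))]" using p by simp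
  also have "\<dots> = (R j (Y y j))[c j := G j (S j (R 0 y))]"
  proof (rule nth_equalityI)
    show "length ((R j (Y y (Suc j)))[c j := G j (S j (R 0 y))]) = length ((R j (Y y j))[c j := G j (S j (R 0 y))])"
      using R_length[OF l] R_length[OF IH(1)] by simp
    fix i assume "i < length ((R j (Y y (Suc j)))[c j := G j (S j (R 0 y))])"
    then have im: "i < m" using R_length[OF l] by (simp del: R.simps)
    show "(R j (Y y (Suc j)))[c j := G j (S j (R 0 y))] ! i = (R j (Y y j))[c j := G j (S j (R 0 y))] ! i"
    proof (cases "i = c j")
      case True
      have "length (R j (Y y (Suc j))) = m" "length (R j (Y y j)) = m"
        using R_length[OF l] R_length[OF IH(1)] by blast+
      then show ?thesis using im True by (simp del: R.simps)
    next
      case False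
      then have "pos j < n \<longrightarrow> i \<noteq> pos j" using pos_small[of j] by auto
      then show ?thesis using agree[OF im] False by simp
    qed
  qed
  also have "\<dots> = S (Suc j) (R 0 y)" using IH by simp
  finally show ?case using l by simp
qed

lemma R_last: assumes "length y = n + K"
  shows "j \<le> t \<Longrightarrow> i < n \<Longrightarrow> (\<forall>s. j \<le> s \<and> s < t \<longrightarrow> c s \<noteq> i) \<Longrightarrow> R j y ! i = y ! i"
proof (induction j)
  case 0 then show ?case using R0_nth[OF assms] nm by auto
next
  case (Suc j)
  show ?case
  proof (cases "c j = i")
    case True
    then have "d j" using Suc.prems unfolding d_def by auto
    then have "pos j = i" using True by (simp add: pos_def)
    then show ?thesis using True R_length[OF assms] Suc.prems nm by simp
  next
    case False
    have "\<forall>s. j \<le> s \<and> s < t \<longrightarrow> c s \<noteq> i"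
      using False Suc.prems(3) by (metis Suc_leI le_eq_less_or_eq)
    then show ?thesis using Suc False by simp
  qed
qed

lemma fold_id: "\<forall>p\<in>set ps. upd F p z = z \<Longrightarrow> fold (\<lambda>i y. upd F i y) ps z = z"
  by (induction ps) auto

lemma seq: "sequentializes q n (n + K) h F W"
  unfolding sequentializes_def
proof (intro conjI ballI)
  show "n \<le> n + K" by simp
  show "is_map q (n + K) F" by (rule F_map)
  show "is_perm_word (n + K) W" by (rule W_perm)
  fix y assume y: "y \<in> states q (n + K)"
  then have ly: "length y = n + K" by (simp add: states_def)
  note inv = Y_inv[OF ly order.refl]
  have tr: "upd F p (Y y t) = Y y t" if "p \<in> set (filter (\<lambda>p. p \<notin> pos ` {..<t}) [0..<n+K])" for p
    using that F_nth_other[of p "Y y t"] by (simp add: upd_def)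
  have fi: "fold (\<lambda>i y. upd F i y) (filter (\<lambda>p. p \<notin> pos ` {..<t}) [0..<n+K]) (Y y t) = Y y t"
    using fold_id tr by blast
  have sa: "seq_apply F W y = Y y t"
    unfolding seq_apply_def W_def fold_append comp_def using fi
    by (simp add: Y_def)
  have x0: "R 0 y \<in> states q m" using R_states[OF y, of 0] by blast
  have "take n (Y y t) = take n (R t (Y y t))"
    using R_last[of "Y y t" t] inv R_length[of "Y y t" t] nm
    by (intro nth_equalityI) auto
  also have "\<dots> = take n (S t (R 0 y))" using inv by simp
  also have "\<dots> = h (take n (R 0 y))" using cor x0 fold_all[OF x0] by (metis (no_types))
  also have "take n (R 0 y) = take n y" using ly by simp
  then have "h (take n (R 0 y)) = h (take n y)" by simp
  finally show "take n (seq_apply F W y) = h (take n y)" using sa by simp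
qed

lemma count: "Omega q n h + K \<le> t"
proof -
  define D where "D = {s. s < t \<and> d s}"
  define N where "N = {i. i < n \<and> \<not> (\<forall>x\<in>states q n. h x ! i = x ! i)}"
  have "N \<subseteq> c ` D"
  proof
    fix i assume "i \<in> N"
    then have i: "i < n" "\<not> (\<forall>x\<in>states q n. h x ! i = x ! i)" by (auto simp: N_def)
    have "\<exists>s<t. c s = i"
    proof (rule ccontr)
      assume nw: "\<not> (\<exists>s<t. c s = i)"
      have "h x ! i = x ! i" if x: "x \<in> states q n" for x
      proof -
        define x0 where "x0 = x @ replicate (m - n) 0"
        have x0s: "x0 \<in> states q m" using x q0 nm by (auto simp: x0_def states_def nth_append)
        have tx: "take n x0 = x" using x by (simp add: x0_def states_def)
        have "take n (fold (\<lambda>g y. g y) gs x0) = h (take n x0)" using cor x0s by blast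
        then have "h x = take n (S t x0)" using fold_all[OF x0s] tx by simp
        then have "h x ! i = S t x0 ! i" using i(1) by simp
        also have "\<dots> = x0 ! i" using nw S_unwritten by auto
        also have "\<dots> = x ! i" using x i(1) by (simp add: x0_def states_def nth_append)
        finally show ?thesis .
      qed
      then show False using i(2) by auto
    qed
    then have ne: "{s. s < t \<and> c s = i} \<noteq> {}" by auto
    define s where "s = Max {s. s < t \<and> c s = i}"
    have "s \<in> {s. s < t \<and> c s = i}" unfolding s_def using ne by (intro Max_in) auto
    moreover have "\<forall>s'. s < s' \<and> s' < t \<longrightarrow> c s' \<noteq> c s"
      using calculation unfolding s_def using Max_ge[of "{s. s < t \<and> c s = i}"] by (auto simp: not_less[symmetric])
    ultimately have "s \<in> D" "c s = i" using i(1) by (auto simp: D_def d_def)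
    then show "i \<in> c ` D" by auto
  qed
  then have "card N \<le> card D"
    using card_mono[of "c ` D" N] card_image_le[of D c] by (auto simp: D_def)
  moreover have "card D + K = t"
  proof -
    have "{..<t} = D \<union> {s. s < t \<and> \<not> d s}" "D \<inter> {s. s < t \<and> \<not> d s} = {}" by (auto simp: D_def)
    then have "card {..<t} = card D + card {s. s < t \<and> \<not> d s}"
      by (metis card_Un_disjoint finite_Un finite_lessThan)
    then show ?thesis by (simp add: K_def rk_def)
  qed
  ultimately show ?thesis by (simp add: Omega_def N_def)
qed

end


lemma fold_upd_notin: "i \<notin> set ws \<Longrightarrow> fold (upd f) ws y ! i = y ! i"
  by (induction ws arbitrary: y) (auto simp: upd_def)

lemma fold_upd_length[simp]: "length (fold (upd f) ws y) = length y"
  by (induction ws arbitrary: y) (auto simp: upd_def)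

lemma seq_to_prog:
  assumes sq: "sequentializes q n (n + k) h f w"
  shows "computes_with q n h (n + k) (Omega q n h + k)"
proof -
  define T where "T = {i. i < n \<and> (\<forall>x\<in>states q n. h x ! i = x ! i)}"
  define P where "P i = (\<not> (i < n \<and> (\<forall>x\<in>states q n. h x ! i = x ! i)))" for i
  have fm: "is_map q (n + k) f" and pw: "is_perm_word (n + k) w"
    and fc: "\<forall>x\<in>states q (n + k). take n (seq_apply f w x) = h (take n x)"
    using sq by (auto simp: sequentializes_def)
  have dw: "distinct w" and sw: "set w = {..<n+k}" using pw by (auto simp: is_perm_word_def)
  define gs where "gs = map (upd f) (filter P w)"
  have len: "length gs = Omega q n h + k"
  proof -
    have "length gs = card ({x. P x} \<inter> set w)" using distinct_length_filter[OF dw] by (simp add: gs_def)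
    also have "{x. P x} \<inter> set w = {..<n+k} - T" using sw by (auto simp: P_def T_def)
    also have "card ({..<n+k} - T) = card {..<n+k} - card T"
      by (rule card_Diff_subset) (auto simp: T_def)
    finally have c1: "length gs = n + k - card T" by simp
    define N where "N = {i. i < n \<and> \<not> (\<forall>x\<in>states q n. h x ! i = x ! i)}"
    have u: "{..<n} = T \<union> N" by (auto simp: T_def N_def)
    have di: "T \<inter> N = {}" by (auto simp: T_def N_def)
    have fT: "finite T" "finite N" by (auto simp: T_def N_def)
    have "card (T \<union> N) = card T + card N" using card_Un_disjoint[OF fT di] .
    then have "card T + card N = n" using u by (metis card_lessThan)
    then have "card T + Omega q n h = n" by (simp add: Omega_def N_def)
    then show ?thesis using c1 by simp
  qed
  have sus: "\<forall>g\<in>set gs. single_update q (n + k) g"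
  proof
    fix g assume "g \<in> set gs"
    then obtain i where i: "i \<in> set w" "g = upd f i" by (auto simp: gs_def)
    then have ik: "i < n + k" using sw by auto
    have "is_map q (n + k) g" unfolding is_map_def
    proof
      fix y assume y: "y \<in> states q (n + k)"
      then have "f y \<in> states q (n + k)" using fm by (auto simp: is_map_def)
      then have "\<forall>p<n+k. y[i := f y ! i] ! p < q" using y ik
        by (auto simp: states_def nth_list_update)
      then show "g y \<in> states q (n + k)" using y ik i(2)
        by (simp add: states_def upd_def)
    qed
    moreover have "\<forall>x\<in>states q (n + k). \<forall>j<n + k. j \<noteq> i \<longrightarrow> g x ! j = x ! j"
      using i(2) by (auto simp: upd_def)
    ultimately show "single_update q (n + k) g" using ik by (auto simp: single_update_def)
  qed
  have corr: "take n (fold (\<lambda>g y. g y) gs x) = h (take n x)" if x: "x \<in> states q (n + k)" for x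
  proof -
    have lx: "length x = n + k" using x by (simp add: states_def)
    have fin: "take n (fold (upd f) w x) = h (take n x)" using fc x by (simp add: seq_apply_def)
    have "j \<le> length w \<Longrightarrow> fold (upd f) (filter P (take j w)) x = fold (upd f) (take j w) x" for j
    proof (induction j)
      case 0 then show ?case by simp
    next
      case (Suc j)
      then have jl: "j < length w" by simp
      have tk: "take (Suc j) w = take j w @ [w ! j]" using jl by (simp add: take_Suc_conv_app_nth)
      show ?case
      proof (cases "P (w ! j)")
        case True then show ?thesis using Suc tk by simp
      next
        case False
        define i where "i = w ! j"
        have decomp: "w = take j w @ i # drop (Suc j) w" using jl by (simp add: i_def id_take_nth_drop)
        have "distinct (take j w @ i # drop (Suc j) w)" by (rule subst[OF decomp, where P=distinct, OF dw])
        then have ni1: "i \<notin> set (take j w)" and ni2: "i \<notin> set (drop (Suc j) w)"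
          by auto
        have triv: "i < n" "\<forall>x\<in>states q n. h x ! i = x ! i" using False by (auto simp: P_def i_def)
        define Z where "Z = fold (upd f) (take j w) x"
        have lZ: "length Z = n + k" using lx by (simp add: Z_def)
        have Zi: "Z ! i = x ! i" using fold_upd_notin[OF ni1] by (simp add: Z_def)
        have "fold (upd f) w x = fold (upd f) (drop (Suc j) w) (upd f i Z)"
          by (subst decomp) (simp add: Z_def)
        then have "fold (upd f) w x ! i = upd f i Z ! i" using fold_upd_notin[OF ni2] by simp
        also have "\<dots> = f Z ! i" using lZ triv(1) by (simp add: upd_def)
        finally have e1: "f Z ! i = fold (upd f) w x ! i" by simp
        have "fold (upd f) w x ! i = take n (fold (upd f) w x) ! i" using triv(1) by simp
        also have "\<dots> = h (take n x) ! i" using fin by simp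
        also have "\<dots> = take n x ! i" using triv(2) x by (auto simp: states_def)
        also have "\<dots> = x ! i" using triv(1) by simp
        finally have "f Z ! i = Z ! i" using e1 Zi by simp
        then have "upd f i Z = Z" by (simp add: upd_def)
        then show ?thesis using Suc tk False by (simp add: i_def Z_def)
      qed
    qed
    from this[of "length w"] have "fold (upd f) (filter P w) x = fold (upd f) w x" by simp
    moreover have "fold (\<lambda>g y. g y) gs x = fold (upd f) (filter P w) x"
      by (simp add: gs_def fold_map comp_def)
    ultimately show ?thesis using fin by simp
  qed
  show ?thesis unfolding computes_with_def using len sus corr by blast
qed


lemma exists_seq:
  assumes hm: "is_map q n h"
  shows "\<exists>f w. sequentializes q n (n + n) h f w"
proof -
  define f where "f y = map (\<lambda>p. if p < n then h (drop n y) ! p else y ! (p - n)) [0..<n+n]" for y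
  define w where "w = [n..<n+n] @ [0..<n]"
  have fn: "p < n + n \<Longrightarrow> f y ! p = (if p < n then h (drop n y) ! p else y ! (p - n))" for p y
    by (simp add: f_def)
  have pw: "is_perm_word (n + n) w" unfolding is_perm_word_def w_def by auto
  have fm: "is_map q (n + n) f" unfolding is_map_def
  proof
    fix y assume y: "y \<in> states q (n + n)"
    have ds: "drop n y \<in> states q n" using y by (auto simp: states_def)
    then have "h (drop n y) \<in> states q n" using hm by (auto simp: is_map_def)
    then show "f y \<in> states q (n + n)" using y by (auto simp: states_def f_def)
  qed
  have corr: "take n (seq_apply f w y) = h (take n y)" if y: "y \<in> states q (n + n)" for y
  proof -
    have ly: "length y = n + n" using y by (simp add: states_def)
    define Z where "Z j = fold (upd f) [n..<n+j] y" for j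
    have Zp: "j \<le> n \<Longrightarrow> length (Z j) = n + n \<and> (\<forall>p<n+n. Z j ! p = (if n \<le> p \<and> p < n + j then y ! (p - n) else y ! p))" for j
    proof (induction j)
      case 0 then show ?case using ly by (simp add: Z_def)
    next
      case (Suc j)
      then have IH: "length (Z j) = n + n" "\<forall>p<n+n. Z j ! p = (if n \<le> p \<and> p < n + j then y ! (p - n) else y ! p)" and jn: "j < n" by auto
      have "Z (Suc j) = upd f (n + j) (Z j)" by (simp add: Z_def)
      also have "\<dots> = (Z j)[n + j := y ! j]" using IH jn fn[of "n + j" "Z j"] by (simp add: upd_def)
      finally have e: "Z (Suc j) = (Z j)[n + j := y ! j]" .
      show ?case using e IH jn by (auto simp: nth_list_update)
    qed
    define V where "V i = fold (upd f) [0..<i] (Z n)" for i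
    have Vp: "i \<le> n \<Longrightarrow> length (V i) = n + n \<and> (\<forall>p<n+n. V i ! p = (if p < i then h (take n y) ! p else Z n ! p))" for i
    proof (induction i)
      case 0 then show ?case using Zp[of n] by (simp add: V_def)
    next
      case (Suc i)
      then have IH: "length (V i) = n + n" "\<forall>p<n+n. V i ! p = (if p < i then h (take n y) ! p else Z n ! p)" and jn: "i < n" by auto
      have dr: "drop n (V i) = take n y"
      proof (rule nth_equalityI)
        show "length (drop n (V i)) = length (take n y)" using IH ly by simp
        fix p assume "p < length (drop n (V i))"
        then have "p < n" using IH by simp
        then show "drop n (V i) ! p = take n y ! p" using IH Zp[of n] ly jn by simp
      qed
      have "V (Suc i) = upd f i (V i)" by (simp add: V_def)
      also have "\<dots> = (V i)[i := h (take n y) ! i]" using IH jn fn[of i "V i"] dr by (simp add: upd_def)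
      finally have e: "V (Suc i) = (V i)[i := h (take n y) ! i]" .
      show ?case using e IH jn by (auto simp: nth_list_update)
    qed
    have sa: "seq_apply f w y = V n" by (simp add: seq_apply_def w_def V_def Z_def)
    have "take n y \<in> states q n" using y by (auto simp: states_def)
    then have lh: "length (h (take n y)) = n" using hm by (auto simp: is_map_def states_def)
    show ?thesis unfolding sa using Vp[of n] lh by (intro nth_equalityI) auto
  qed
  have "sequentializes q n (n + n) h f w" unfolding sequentializes_def using fm pw corr by auto
  then show ?thesis by blast
qed

theorem mainTheorem7:
  fixes q n :: nat and h :: "nat list \<Rightarrow> nat list"
  assumes "q \<ge> 2" and "n \<ge> 1" and "is_map q n h"
  shows "Lstar q n h = L q n h (n + kappa_min q n h) \<and>
         L q n h (n + kappa_min q n h) = Omega q n h + kappa_min q n h"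
proof -
  define \<kappa> where "\<kappa> = kappa_min q n h"
  have ex: "\<exists>k f w. sequentializes q n (n + k) h f w" using exists_seq[OF assms(3)] by blast
  have "\<exists>f w. sequentializes q n (n + \<kappa>) h f w"
    unfolding \<kappa>_def kappa_min_def by (rule LeastI_ex[OF ex])
  then obtain f w where sq: "sequentializes q n (n + \<kappa>) h f w" by blast
  have wit: "computes_with q n h (n + \<kappa>) (Omega q n h + \<kappa>)" by (rule seq_to_prog[OF sq])
  have lower: "Omega q n h + \<kappa> \<le> t" if nm': "n \<le> m" and cw: "computes_with q n h m t" for m t
  proof -
    obtain gs where gs: "length gs = t" "\<forall>g\<in>set gs. single_update q m g"
      "\<forall>x\<in>states q m. take n (fold (\<lambda>g y. g y) gs x) = h (take n x)"
      using cw unfolding computes_with_def by blast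
    interpret prog q n m h gs using gs nm' assms(1) by unfold_locales auto
    have "\<kappa> \<le> K" unfolding \<kappa>_def kappa_min_def by (rule Least_le) (use seq in blast)
    then show ?thesis using count gs(1) by (simp add: t_def)
  qed
  have L1: "L q n h (n + \<kappa>) = Omega q n h + \<kappa>"
    unfolding L_def by (rule Least_equality) (use wit lower[of "n + \<kappa>"] in auto)
  have L2: "Lstar q n h = Omega q n h + \<kappa>"
    unfolding Lstar_def
  proof (rule Least_equality)
    show "\<exists>m\<ge>n. computes_with q n h m (Omega q n h + \<kappa>)" using wit le_add1 by blast
  qed (use lower in auto)
  show ?thesis using L1 L2 by (simp add: \<kappa>_def)
qed

end
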